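(* Fix $\nu>0$ and $\mu_k\in\mathbb{R}$, and consider the sub-problem of minimizing $\mathcal L_{\nu,\mu_k}(x)=f(x)+\mu_kh(x)+\frac{1}{2\nu}h(x)^2$ over $x\in\mathbb{R}^n$. Let $\bar x$ be a stationary point of $\mathcal L_{\nu,\mu_k}$, and set $\bar\tau=h(\bar x)/\nu$, $\bar\sigma_f=\nabla V_f(\Lambda_f(\bar x))$, $\bar\sigma_h=\nabla V_h(\Lambda_h(\bar x))$. If $G(\bar\tau,\bar\sigma_f,\bar\sigma_h)$ is nonsingular, then $(\bar\tau,\bar\sigma_f,\bar\sigma_h)$ is a stationary point of $P^d_{\nu,\mu_k}$ and $$\mathcal L_{\nu,\mu_k}(\bar x)=P^d_{\nu,\mu_k}(\bar\tau,\bar\sigma_f,\bar\sigma_h).$$ Furthermore, if $V_f$ and $V_h$ are convex, $\mu_k+\bar\tau>0$ and $G(\bar\tau,\bar\sigma_f,\bar\sigma_h)\succ0$, then $\bar x$ is a global minimizer of $\mathcal L_{\nu,\mu_k}$ on $\mathbb{R}^n$.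
   Context: Setting: $f(x)=V_f(\Lambda_f(x))+\tfrac12x^TAx-c^Tx$ ($A$ symmetric, $c\in\mathbb{R}^n$) and a single constraint function $h(x)=V_h(\Lambda_h(x))\in\mathbb{R}$, where $\Lambda_f:\mathbb{R}^n\to\mathbb{R}^{k_f}$, $\Lambda_h:\mathbb{R}^n\to\mathbb{R}^{l}$ are quadratic maps (components polynomials of degree at most 2), and $V_f,V_h$ are "canonical functions": each $V$ is differentiable on an open set $E$ containing the image of its $\Lambda$, $\nabla V:E\to E^*$ is a bijection onto an open set $E^*$, and the Legendre conjugate $V^*(\sigma)=\sigma^T\xi-V(\xi)$, $\xi=(\nabla V)^{-1}(\sigma)$, is differentiable on $E^*$ with $\nabla V^*=(\nabla V)^{-1}$. For fixed $\nu>0,\mu_k$, define for $\tau\in\mathbb{R}$, $\sigma_f\in E_f^*$, $\sigma_h\in E_h^*$: $$\Xi_1^{\nu,\mu_k}(x,\tau,\sigma_f,\sigma_h)=\Lambda_f(x)^T\sigma_f-V_f^*(\sigma_f)+(\mu_k+\tau)\big[\Lambda_h(x)^T\sigma_h-V_h^*(\sigma_h)\big]-\tfrac{\nu}{2}\tau^2+\tfrac12x^TAx-c^Tx,$$ which is quadratic in $x$ with $x$-independent Hessian $G(\tau,\sigma_f,\sigma_h)=\nabla_x^2\Xi_1^{\nu,\mu_k}$. The dual function $P^d_{\nu,\mu_k}(\tau,\sigma_f,\sigma_h)$ is defined, on the open set where $G(\tau,\sigma_f,\sigma_h)$ is nonsingular, as the value of $\Xi_1^{\nu,\mu_k}(\cdot,\tau,\sigma_f,\sigma_h)$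 at its unique stationary point in $x$; equivalently $P^d_{\nu,\mu_k}=U^\Lambda(\mu_k+\tau,\sigma_f,\sigma_h)-V_f^*(\sigma_f)-(\mu_k+\tau)V_h^*(\sigma_h)-\frac{\nu}{2}\tau^2$, where $U^\Lambda(\mu,\sigma_f,\sigma_h)$ is the stationary value in $x$ of $\Lambda_f(x)^T\sigma_f+\mu\Lambda_h(x)^T\sigma_h+\tfrac12x^TAx-c^Tx$. *)

theory Defs
  imports "HOL-Analysis.Analysis"
begin

text \<open>A quadratic map R^n -> R^k: every component is a polynomial of degree at most 2,
  written as (1/2) x'Q_i x + b_i'x + d_i with Q_i symmetric (every such polynomial
  has a unique representation of this form).\<close>
definition quad_map ::
  "('k::finite \<Rightarrow> real^'n^'n) \<Rightarrow> ('k \<Rightarrow> real^'n) \<Rightarrow> ('k \<Rightarrow> real) \<Rightarrow> real^'n \<Rightarrow> real^'k" where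
  "quad_map Q b d x = (\<chi> i. (1/2) * (x \<bullet> (Q i *v x)) + b i \<bullet> x + d i)"

text \<open>Hessian of x \<mapsto> sigma' (quad_map Q b d x), i.e. sum_i sigma_i Q_i.\<close>
definition hess_comb :: "('k::finite \<Rightarrow> real^'n^'n) \<Rightarrow> real^'k \<Rightarrow> real^'n^'n" where
  "hess_comb Q \<sigma> = (\<Sum>i\<in>UNIV. (\<sigma> $ i) *\<^sub>R Q i)"

definition legendre_conj ::
  "(real^'k \<Rightarrow> real) \<Rightarrow> (real^'k \<Rightarrow> real^'k) \<Rightarrow> (real^'k) set \<Rightarrow> real^'k \<Rightarrow> real" where
  "legendre_conj V gV E \<sigma> = (let \<xi> = inv_into E gV \<sigma> in \<sigma> \<bullet> \<xi> - V \<xi>)"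

definition canonical ::
  "(real^'k \<Rightarrow> real) \<Rightarrow> (real^'k \<Rightarrow> real^'k) \<Rightarrow> (real^'k) set \<Rightarrow> (real^'k) set \<Rightarrow> bool" where
  "canonical V gV E Es \<longleftrightarrow> open E \<and> open Es \<and>
     (\<forall>\<xi>\<in>E. GDERIV V \<xi> :> gV \<xi>) \<and> bij_betw gV E Es \<and>
     (\<forall>\<sigma>\<in>Es. GDERIV (legendre_conj V gV E) \<sigma> :> inv_into E gV \<sigma>)"

definition pos_def_mat :: "real^'n^'n \<Rightarrow> bool" where
  "pos_def_mat M \<longleftrightarrow> (\<forall>x. x \<noteq> 0 \<longrightarrow> x \<bullet> (M *v x) > 0)"

end

theory Submission
  imports Defs
begin

lemma gderiv_qform:
  fixes M :: "real^'n^'n"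
  assumes "transpose M = M"
  shows "GDERIV (\<lambda>y. y \<bullet> (M *v y)) x :> 2 *\<^sub>R (M *v x)"
proof -
  have "((\<lambda>y. y \<bullet> (M *v y)) has_derivative (\<lambda>h. h \<bullet> (M *v x) + x \<bullet> (M *v h))) (at x)"
  proof -
    have d: "((*v) M has_derivative (*v) M) (at x)"
      using bounded_linear_imp_has_derivative[OF matrix_vector_mul_bounded_linear] .
    show ?thesis by (rule has_derivative_eq_rhs[OF has_derivative_inner[OF has_derivative_ident d]]) (simp add: add.commute)
  qed
  moreover have "(\<lambda>h. h \<bullet> (M *v x) + x \<bullet> (M *v h)) = (\<lambda>h. h \<bullet> (2 *\<^sub>R (M *v x)))"
  proof
    fix h
    have "x \<bullet> (M *v h) = (x v* M) \<bullet> h" by (simp add: dot_lmul_matrix)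
    also have "x v* M = transpose M *v x" by simp
    finally show "h \<bullet> (M *v x) + x \<bullet> (M *v h) = h \<bullet> (2 *\<^sub>R (M *v x))"
      using assms by (simp add: inner_commute)
  qed
  ultimately show ?thesis by (simp add: gderiv_def)
qed

lemma gderiv_lin: "GDERIV (\<lambda>y. b \<bullet> y) x :> b"
  unfolding gderiv_def
  by (rule has_derivative_eq_rhs, (rule derivative_intros)+) (auto simp: inner_commute)

lemma gderiv_cmult: "GDERIV f x :> g \<Longrightarrow> GDERIV (\<lambda>y. c * f y) x :> c *\<^sub>R g"
  using GDERIV_mult[OF GDERIV_const[of c x]] by simp

lemma gderiv_qm_comp:
  assumes "transpose (Q i) = Q i"
  shows "GDERIV (\<lambda>y. quad_map Q b d y $ i) x :> Q i *v x + b i"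
proof -
  have "GDERIV (\<lambda>y. (1/2) * (y \<bullet> (Q i *v y)) + b i \<bullet> y + d i) x :> (1/2) *\<^sub>R (2 *\<^sub>R (Q i *v x)) + b i + 0"
    by (intro GDERIV_add GDERIV_const gderiv_lin gderiv_cmult gderiv_qform assms)
  then show ?thesis by (simp add: quad_map_def)
qed

lemma qm_deriv:
  fixes Q :: "'k::finite \<Rightarrow> real^'n^'n"
  assumes "\<forall>i. transpose (Q i) = Q i"
  shows "(quad_map Q b d has_derivative (\<lambda>h. \<chi> i. h \<bullet> (Q i *v x + b i))) (at x)"
proof (subst has_derivative_componentwise_within, intro ballI)
  fix u :: "real^'k" assume "u \<in> Basis"
  then obtain i where u: "u = axis i 1" by (auto simp: Basis_vec_def)
  have "((\<lambda>y. quad_map Q b d y $ i) has_derivative (\<lambda>h. h \<bullet> (Q i *v x + b i))) (at x)"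
    using gderiv_qm_comp[of Q i b d x] assms by (simp add: gderiv_def)
  then show "((\<lambda>xa. quad_map Q b d xa \<bullet> u) has_derivative (\<lambda>xa. (\<chi> i. xa \<bullet> (Q i *v x + b i)) \<bullet> u)) (at x)"
    by (simp add: u inner_axis)
qed

lemma mv_sum: "(\<Sum>i\<in>S. f i) *v x = (\<Sum>i\<in>S. f i *v x)"
  by (induction S rule: infinite_finite_induct) (auto simp: matrix_vector_mult_add_rdistrib)

lemma hess_comb_mv: "hess_comb Q s *v x = (\<Sum>i\<in>UNIV. (s $ i) *\<^sub>R (Q i *v x))"
  unfolding hess_comb_def mv_sum by (simp add: scaleR_matrix_vector_assoc)

lemma gderiv_chain:
  assumes "\<forall>i. transpose (Q i) = Q i" and "GDERIV V (quad_map Q b d x) :> g"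
  shows "GDERIV (\<lambda>y. V (quad_map Q b d y)) x :> hess_comb Q g *v x + (\<Sum>i\<in>UNIV. (g $ i) *\<^sub>R b i)"
proof -
  have "((\<lambda>y. V (quad_map Q b d y)) has_derivative (\<lambda>h. (\<chi> i. h \<bullet> (Q i *v x + b i)) \<bullet> g)) (at x)"
    using has_derivative_compose[OF qm_deriv[OF assms(1)] assms(2)[unfolded gderiv_def]] .
  moreover have "(\<lambda>h. (\<chi> i. h \<bullet> (Q i *v x + b i)) \<bullet> g) = (\<lambda>h. h \<bullet> (hess_comb Q g *v x + (\<Sum>i\<in>UNIV. (g $ i) *\<^sub>R b i)))"
  proof
    fix h
    have "(\<chi> i. h \<bullet> (Q i *v x + b i)) \<bullet> g = (\<Sum>i\<in>UNIV. (h \<bullet> (Q i *v x + b i)) * g $ i)"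
      by (simp add: inner_vec_def)
    also have "\<dots> = h \<bullet> (\<Sum>i\<in>UNIV. (g $ i) *\<^sub>R (Q i *v x + b i))"
      by (simp add: inner_sum_right mult.commute)
    also have "(\<Sum>i\<in>UNIV. (g $ i) *\<^sub>R (Q i *v x + b i)) = hess_comb Q g *v x + (\<Sum>i\<in>UNIV. (g $ i) *\<^sub>R b i)"
      by (simp add: hess_comb_mv scaleR_right_distrib sum.distrib)
    finally show "(\<chi> i. h \<bullet> (Q i *v x + b i)) \<bullet> g = h \<bullet> (hess_comb Q g *v x + (\<Sum>i\<in>UNIV. (g $ i) *\<^sub>R b i))" .
  qed
  ultimately show ?thesis by (simp add: gderiv_def)
qed

lemma qm_inner:
  "quad_map Q b d y \<bullet> s = (1/2) * (y \<bullet> (hess_comb Q s *v y)) + (\<Sum>i\<in>UNIV. s $ i *\<^sub>R b i) \<bullet> y + (\<Sum>i\<in>UNIV. s $ i * d i)"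
  apply (simp add: quad_map_def inner_vec_def hess_comb_mv inner_sum_right inner_sum_left
      sum.distrib sum_distrib_left algebra_simps)
  apply (subst sum.swap)
  apply simp
  apply (rule sum.swap)
  done

definition qf :: "real^'n^'n \<Rightarrow> real^'n \<Rightarrow> real \<Rightarrow> real^'n \<Rightarrow> real" where
  "qf M \<beta> \<gamma> y = (1/2) * (y \<bullet> (M *v y)) + \<beta> \<bullet> y + \<gamma>"

lemma qf_gderiv:
  assumes "transpose M = M"
  shows "GDERIV (qf M \<beta> \<gamma>) x :> M *v x + \<beta>"
proof -
  have "GDERIV (\<lambda>y. (1/2) * (y \<bullet> (M *v y)) + \<beta> \<bullet> y + \<gamma>) x :> (1/2) *\<^sub>R (2 *\<^sub>R (M *v x)) + \<beta> + 0"
    by (intro GDERIV_add GDERIV_const gderiv_lin gderiv_cmult gderiv_qform assms)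
  then show ?thesis by (simp add: qf_def[abs_def])
qed

lemma sym_swap:
  fixes M :: "real^'n^'n"
  assumes "transpose M = M"
  shows "x \<bullet> (M *v y) = y \<bullet> (M *v x)"
proof -
  have "x \<bullet> (M *v y) = (x v* M) \<bullet> y" by (simp add: dot_lmul_matrix)
  also have "x v* M = transpose M *v x" by simp
  finally show ?thesis using assms by (simp add: inner_commute)
qed

lemma qf_expand:
  assumes "transpose M = M"
  shows "qf M \<beta> \<gamma> y = qf M \<beta> \<gamma> x + (M *v x + \<beta>) \<bullet> (y - x) + (1/2) * ((y - x) \<bullet> (M *v (y - x)))"
  using sym_swap[OF assms, of x y]
  by (simp add: qf_def matrix_vector_mult_diff_distrib inner_diff_left inner_diff_right
      inner_add_left algebra_simps inner_commute)

lemma gderiv_zero_iff: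
  assumes "GDERIV f x :> a"
  shows "(GDERIV f x :> 0) \<longleftrightarrow> a = 0"
proof
  assume "GDERIV f x :> 0"
  then have "(\<lambda>h. h \<bullet> a) = (\<lambda>h. h \<bullet> (0::'a))"
    using has_derivative_unique assms unfolding gderiv_def by blast
  then have "a \<bullet> a = 0" by (metis inner_zero_right)
  then show "a = 0" by simp
qed (use assms in simp)

lemma transpose_add': "transpose (A + B) = transpose A + transpose (B::'a::semiring_1^'n^'m)"
  by (simp add: transpose_def vec_eq_iff)

lemma transpose_sum': "transpose (\<Sum>i\<in>S. f i) = (\<Sum>i\<in>S. transpose (f i :: real^'n^'m))"
  by (induction S rule: infinite_finite_induct) (auto simp: transpose_add' transpose_def vec_eq_iff)

lemma hess_comb_sym:
  assumes "\<forall>i. transpose (Q i) = Q i"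
  shows "transpose (hess_comb Q s) = hess_comb Q s"
  using assms by (simp add: hess_comb_def transpose_sum' transpose_scalar)

lemma tangent_ineq:
  fixes V :: "'a::real_inner \<Rightarrow> real"
  assumes cv: "convex_on E V" and xi: "\<xi> \<in> E" and z: "z \<in> E" and g: "GDERIV V \<xi> :> g"
  shows "V \<xi> + g \<bullet> (z - \<xi>) \<le> V z"
proof -
  let ?d = "z - \<xi>"
  have "((\<lambda>t. \<xi> + t *\<^sub>R ?d) has_derivative (\<lambda>t. t *\<^sub>R ?d)) (at 0)"
    by (rule has_derivative_eq_rhs, (rule derivative_intros)+) auto
  moreover have "(V has_derivative (\<lambda>h. h \<bullet> g)) (at (\<xi> + 0 *\<^sub>R ?d))"
    using g by (simp add: gderiv_def)
  ultimately have "((\<lambda>t. V (\<xi> + t *\<^sub>R ?d)) has_derivative (\<lambda>t. (t *\<^sub>R ?d) \<bullet> g)) (at 0)"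
    by (rule has_derivative_compose)
  then have "((\<lambda>t. V (\<xi> + t *\<^sub>R ?d)) has_field_derivative (?d \<bullet> g)) (at 0)"
    by (simp add: has_field_derivative_def mult.commute[of _ "?d \<bullet> g"])
  then have "((\<lambda>t. (V (\<xi> + t *\<^sub>R ?d) - V \<xi>) / t) \<longlongrightarrow> ?d \<bullet> g) (at 0)"
    by (simp add: has_field_derivative_iff)
  then have lim: "((\<lambda>t. (V (\<xi> + t *\<^sub>R ?d) - V \<xi>) / t) \<longlongrightarrow> ?d \<bullet> g) (at_right 0)"
    by (simp add: filterlim_at_split)
  have ev: "eventually (\<lambda>t. (V (\<xi> + t *\<^sub>R ?d) - V \<xi>) / t \<le> V z - V \<xi>) (at_right 0)"
    unfolding eventually_at_right_field
  proof (intro exI[of _ 1] conjI allI impI)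
    fix t :: real assume t0: "0 < t" and t1: "t < 1"
    note t = t0 t1
    have "\<xi> + t *\<^sub>R ?d = (1 - t) *\<^sub>R \<xi> + t *\<^sub>R z" by (simp add: algebra_simps)
    then have "V (\<xi> + t *\<^sub>R ?d) \<le> (1 - t) * V \<xi> + t * V z"
      using convex_onD[OF cv, of t \<xi> z] t xi z by simp
    then have "V (\<xi> + t *\<^sub>R ?d) - V \<xi> \<le> t * (V z - V \<xi>)" by (simp add: algebra_simps)
    then show "(V (\<xi> + t *\<^sub>R ?d) - V \<xi>) / t \<le> V z - V \<xi>"
      using t by (simp add: divide_le_eq mult.commute)
  qed simp
  have "?d \<bullet> g \<le> V z - V \<xi>"
    by (rule tendsto_le[OF _ tendsto_const lim ev]) simp
  then show ?thesis by (simp add: inner_commute)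
qed

lemma small_deriv:
  fixes E :: "'a::real_normed_vector \<Rightarrow> real"
  assumes ev: "eventually (\<lambda>p. \<bar>E p\<bar> \<le> K * (norm (p - a))\<^sup>2) (at a)" and E0: "E a = 0"
  shows "(E has_derivative (\<lambda>_. 0)) (at a)"
  unfolding has_derivative_iff_norm
proof (intro conjI)
  show "bounded_linear (\<lambda>_::'a. 0::real)" by simp
  have up: "((\<lambda>y. K * norm (y - a)) \<longlongrightarrow> K * norm (a - a)) (at a)"
    by (intro tendsto_intros)
  show "((\<lambda>y. norm (E y - E a - 0) / norm (y - a)) \<longlongrightarrow> 0) (at a)"
  proof (rule tendsto_sandwich[OF _ _ tendsto_const up[simplified]])
    show "\<forall>\<^sub>F y in at a. 0 \<le> norm (E y - E a - 0) / norm (y - a)" by simp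
    show "\<forall>\<^sub>F y in at a. norm (E y - E a - 0) / norm (y - a) \<le> K * norm (y - a)"
      using ev
    proof eventually_elim
      case (elim p)
      show ?case
      proof (cases "p = a")
        case False
        then have "norm (p - a) > 0" by simp
        then show ?thesis using elim E0
          by (simp add: divide_le_eq power2_eq_square mult.assoc)
      qed (use E0 in simp)
    qed
  qed
qed

lemma deriv_lip:
  assumes "(f has_derivative D) (at a)"
  shows "\<exists>K. eventually (\<lambda>p. norm (f p - f a) \<le> K * norm (p - a)) (at a)"
proof -
  from assms have bl: "bounded_linear D"
    and lim: "((\<lambda>y. norm ((f y - f a) - D (y - a)) / norm (y - a)) \<longlongrightarrow> 0) (at a)"
    unfolding has_derivative_iff_norm by auto
  obtain KD where KD: "\<And>x. norm (D x) \<le> norm x * KD" using bounded_linear.bounded[OF bl] by blast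
  have ev: "eventually (\<lambda>y. norm ((f y - f a) - D (y - a)) / norm (y - a) < 1) (at a)"
    using order_tendstoD(2)[OF lim] by simp
  have "eventually (\<lambda>p. norm (f p - f a) \<le> (1 + KD) * norm (p - a)) (at a)"
    using ev
  proof eventually_elim
    case (elim p)
    show ?case
    proof (cases "p = a")
      case False
      then have pos: "norm (p - a) > 0" by simp
      then have "norm ((f p - f a) - D (p - a)) \<le> norm (p - a)"
        using elim by (simp add: divide_less_eq)
      moreover have "norm (f p - f a) \<le> norm ((f p - f a) - D (p - a)) + norm (D (p - a))"
        by (metis diff_add_cancel norm_triangle_ineq)
      ultimately show ?thesis using KD[of "p - a"] by (simp add: algebra_simps)
    qed simp
  qed
  then show ?thesis by blast
qed

lemma has_derivative_vec_nth':
  "(f has_derivative f') F \<Longrightarrow> ((\<lambda>x. f x $ i) has_derivative (\<lambda>h. f' h $ i)) F"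
  by (rule bounded_linear.has_derivative[OF bounded_linear_vec_nth])

lemma mv_norm_le: "norm (M *v v) \<le> (\<Sum>i\<in>UNIV. \<Sum>j\<in>UNIV. \<bar>M $ i $ j\<bar>) * norm (v::real^'n)"
proof -
  have "norm (M *v v) \<le> onorm ((*v) M) * norm v" by (rule onorm) simp
  also have "\<dots> \<le> (\<Sum>i\<in>UNIV. \<Sum>j\<in>UNIV. \<bar>M $ i $ j\<bar>) * norm v"
    by (rule mult_right_mono[OF onorm_le_matrix_component_sum]) simp
  finally show ?thesis .
qed

theorem corollary1:
  fixes \<nu> \<mu> :: real
    and A :: "real^'n^'n" and c :: "real^'n"
    and Qf :: "'kf::finite \<Rightarrow> real^'n^'n" and bf :: "'kf \<Rightarrow> real^'n" and df :: "'kf \<Rightarrow> real"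
    and Qh :: "'l::finite \<Rightarrow> real^'n^'n" and bh :: "'l \<Rightarrow> real^'n" and dh :: "'l \<Rightarrow> real"
    and Vf :: "real^'kf \<Rightarrow> real" and gVf :: "real^'kf \<Rightarrow> real^'kf" and Ef Efs :: "(real^'kf) set"
    and Vh :: "real^'l \<Rightarrow> real" and gVh :: "real^'l \<Rightarrow> real^'l" and Eh Ehs :: "(real^'l) set"
    and f h L :: "real^'n \<Rightarrow> real"
    and Xi :: "real^'n \<Rightarrow> real \<Rightarrow> real^'kf \<Rightarrow> real^'l \<Rightarrow> real"
    and G :: "real \<Rightarrow> real^'kf \<Rightarrow> real^'l \<Rightarrow> real^'n^'n"
    and Pd :: "real \<Rightarrow> real^'kf \<Rightarrow> real^'l \<Rightarrow> real"
    and xbar :: "real^'n"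
  assumes nu_pos: "\<nu> > 0"
    and A_sym: "transpose A = A"
    and Qf_sym: "\<forall>i. transpose (Qf i) = Qf i"
    and Qh_sym: "\<forall>j. transpose (Qh j) = Qh j"
    and Vf_can: "canonical Vf gVf Ef Efs"
    and Vh_can: "canonical Vh gVh Eh Ehs"
    and Lf_img: "range (quad_map Qf bf df) \<subseteq> Ef"
    and Lh_img: "range (quad_map Qh bh dh) \<subseteq> Eh"
    and f_def: "\<forall>x. f x = Vf (quad_map Qf bf df x) + (1/2) * (x \<bullet> (A *v x)) - c \<bullet> x"
    and h_def: "\<forall>x. h x = Vh (quad_map Qh bh dh x)"
    and L_def: "\<forall>x. L x = f x + \<mu> * h x + (1 / (2 * \<nu>)) * (h x)\<^sup>2"
    and Xi_def: "\<forall>x \<tau> sf sh. Xi x \<tau> sf sh =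
        quad_map Qf bf df x \<bullet> sf - legendre_conj Vf gVf Ef sf
        + (\<mu> + \<tau>) * (quad_map Qh bh dh x \<bullet> sh - legendre_conj Vh gVh Eh sh)
        - (\<nu> / 2) * \<tau>\<^sup>2 + (1/2) * (x \<bullet> (A *v x)) - c \<bullet> x"
    and G_def: "\<forall>\<tau> sf sh. G \<tau> sf sh = A + hess_comb Qf sf + (\<mu> + \<tau>) *\<^sub>R hess_comb Qh sh"
    and Pd_def: "\<forall>\<tau> sf sh. Pd \<tau> sf sh =
        Xi (THE x. GDERIV (\<lambda>y. Xi y \<tau> sf sh) x :> 0) \<tau> sf sh"
    and stat: "(L has_derivative (\<lambda>_. 0)) (at xbar)"
  shows "(invertible (G (h xbar / \<nu>) (gVf (quad_map Qf bf df xbar)) (gVh (quad_map Qh bh dh xbar))) \<longrightarrow>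
            ((\<lambda>(\<tau>, sf, sh). Pd \<tau> sf sh) has_derivative (\<lambda>_. 0))
               (at (h xbar / \<nu>, gVf (quad_map Qf bf df xbar), gVh (quad_map Qh bh dh xbar)))
            \<and> L xbar = Pd (h xbar / \<nu>) (gVf (quad_map Qf bf df xbar)) (gVh (quad_map Qh bh dh xbar)))
       \<and> (convex_on Ef Vf \<and> convex_on Eh Vh \<and> \<mu> + h xbar / \<nu> > 0 \<and>
            pos_def_mat (G (h xbar / \<nu>) (gVf (quad_map Qf bf df xbar)) (gVh (quad_map Qh bh dh xbar)))
          \<longrightarrow> (\<forall>x. L xbar \<le> L x))"
proof -
  define \<tau>0 where "\<tau>0 = h xbar / \<nu>"
  define xf where "xf = quad_map Qf bf df xbar"
  define xh where "xh = quad_map Qh bh dh xbar"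
  define s0f where "s0f = gVf xf"
  define s0h where "s0h = gVh xh"
  define Bt where "Bt = (\<lambda>\<tau> (sf::real^'kf) (sh::real^'l). (\<Sum>i\<in>UNIV. sf $ i *\<^sub>R bf i) + (\<mu> + \<tau>) *\<^sub>R (\<Sum>j\<in>UNIV. sh $ j *\<^sub>R bh j) - c)"
  define Ct where "Ct = (\<lambda>\<tau> (sf::real^'kf) (sh::real^'l). (\<Sum>i\<in>UNIV. sf $ i * df i) - legendre_conj Vf gVf Ef sf
      + (\<mu> + \<tau>) * ((\<Sum>j\<in>UNIV. sh $ j * dh j) - legendre_conj Vh gVh Eh sh) - (\<nu> / 2) * \<tau>\<^sup>2)"
  have XiE: "Xi y \<tau> sf sh = qf (G \<tau> sf sh) (Bt \<tau> sf sh) (Ct \<tau> sf sh) y" for y \<tau> sf sh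
  proof -
    have g: "y \<bullet> (G \<tau> sf sh *v y) = y \<bullet> (A *v y) + y \<bullet> (hess_comb Qf sf *v y) + (\<mu> + \<tau>) * (y \<bullet> (hess_comb Qh sh *v y))"
      using G_def by (simp add: matrix_vector_mult_add_rdistrib scaleR_matrix_vector_assoc[symmetric] inner_add_right)
    have b: "Bt \<tau> sf sh \<bullet> y = (\<Sum>i\<in>UNIV. sf $ i *\<^sub>R bf i) \<bullet> y + (\<mu> + \<tau>) * ((\<Sum>j\<in>UNIV. sh $ j *\<^sub>R bh j) \<bullet> y) - c \<bullet> y"
      by (simp add: Bt_def inner_add_left inner_diff_left)
    show ?thesis
      unfolding qf_def g b Xi_def[rule_format]
      by (simp add: qm_inner Ct_def algebra_simps)
  qed
  have Gsym: "transpose (G \<tau> sf sh) = G \<tau> sf sh" for \<tau> sf sh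
    using A_sym hess_comb_sym[OF Qf_sym] hess_comb_sym[OF Qh_sym]
    by (simp add: G_def transpose_add' transpose_scalar)
  have XiD: "GDERIV (\<lambda>y. Xi y \<tau> sf sh) x :> G \<tau> sf sh *v x + Bt \<tau> sf sh" for x \<tau> sf sh
    unfolding XiE using qf_gderiv[OF Gsym] by simp
  have stat_iff: "(GDERIV (\<lambda>y. Xi y \<tau> sf sh) x :> 0) \<longleftrightarrow> G \<tau> sf sh *v x + Bt \<tau> sf sh = 0" for x \<tau> sf sh
    using gderiv_zero_iff[OF XiD] .
  have xfE: "xf \<in> Ef" and xhE: "xh \<in> Eh" using Lf_img Lh_img by (auto simp: xf_def xh_def)
  have Vf_d: "GDERIV Vf xf :> s0f" using Vf_can xfE by (simp add: canonical_def s0f_def)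
  have Vh_d: "GDERIV Vh xh :> s0h" using Vh_can xhE by (simp add: canonical_def s0h_def)
  have conjf: "legendre_conj Vf gVf Ef s0f = s0f \<bullet> xf - Vf xf"
    using Vf_can xfE by (simp add: canonical_def legendre_conj_def s0f_def bij_betw_def)
  have conjh: "legendre_conj Vh gVh Eh s0h = s0h \<bullet> xh - Vh xh"
    using Vh_can xhE by (simp add: canonical_def legendre_conj_def s0h_def bij_betw_def)
  have hx: "h xbar = Vh xh" using h_def by (simp add: xh_def)
  define gf where "gf = hess_comb Qf s0f *v xbar + (\<Sum>i\<in>UNIV. s0f $ i *\<^sub>R bf i)"
  define gh where "gh = hess_comb Qh s0h *v xbar + (\<Sum>i\<in>UNIV. s0h $ i *\<^sub>R bh i)"
  have df1: "GDERIV (\<lambda>y. Vf (quad_map Qf bf df y)) xbar :> gf"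
    unfolding gf_def by (rule gderiv_chain[OF Qf_sym]) (use Vf_d xf_def in simp)
  have dh1: "GDERIV (\<lambda>y. Vh (quad_map Qh bh dh y)) xbar :> gh"
    unfolding gh_def by (rule gderiv_chain[OF Qh_sym]) (use Vh_d xh_def in simp)
  have Leq: "L = (\<lambda>y. Vf (quad_map Qf bf df y) + (1/2) * (y \<bullet> (A *v y)) - c \<bullet> y
      + \<mu> * Vh (quad_map Qh bh dh y) + (1 / (2 * \<nu>)) * (Vh (quad_map Qh bh dh y) * Vh (quad_map Qh bh dh y)))"
    using L_def f_def h_def by (auto simp: power2_eq_square)
  have "GDERIV L xbar :> gf + (1/2) *\<^sub>R (2 *\<^sub>R (A *v xbar)) - c + \<mu> *\<^sub>R gh
      + (1 / (2 * \<nu>)) *\<^sub>R (Vh xh *\<^sub>R gh + Vh xh *\<^sub>R gh)"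
    unfolding Leq
    by (intro GDERIV_add GDERIV_diff gderiv_cmult df1 dh1 gderiv_qform A_sym gderiv_lin)
      (use GDERIV_mult[OF dh1 dh1] in \<open>simp add: xh_def\<close>)
  moreover have "GDERIV L xbar :> 0" using stat by (simp add: gderiv_def)
  ultimately have grad0: "gf + (1/2) *\<^sub>R (2 *\<^sub>R (A *v xbar)) - c + \<mu> *\<^sub>R gh
      + (1 / (2 * \<nu>)) *\<^sub>R (Vh xh *\<^sub>R gh + Vh xh *\<^sub>R gh) = 0"
    using gderiv_zero_iff by blast
  have e2: "(1 / (2 * \<nu>)) *\<^sub>R (Vh xh *\<^sub>R gh + Vh xh *\<^sub>R gh) = (Vh xh / \<nu>) *\<^sub>R gh"
    using nu_pos by (simp only: scaleR_add_left[symmetric] scaleR_scaleR) (simp add: field_simps)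
  have statX: "G \<tau>0 s0f s0h *v xbar + Bt \<tau>0 s0f s0h = 0"
  proof -
    have "G \<tau>0 s0f s0h *v xbar + Bt \<tau>0 s0f s0h = gf + (1/2) *\<^sub>R (2 *\<^sub>R (A *v xbar)) - c + \<mu> *\<^sub>R gh
      + (1 / (2 * \<nu>)) *\<^sub>R (Vh xh *\<^sub>R gh + Vh xh *\<^sub>R gh)"
      unfolding e2 using nu_pos
      by (simp add: G_def Bt_def gf_def gh_def \<tau>0_def hx matrix_vector_mult_add_rdistrib
          scaleR_matrix_vector_assoc[symmetric] algebra_simps)
    then show ?thesis using grad0 by simp
  qed
  have Xi0: "Xi xbar \<tau>0 s0f s0h = Vf xf + (\<mu> + \<tau>0) * Vh xh - (\<nu> / 2) * \<tau>0\<^sup>2 + (1/2) * (xbar \<bullet> (A *v xbar)) - c \<bullet> xbar"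
    by (simp add: Xi_def[rule_format] xf_def[symmetric] xh_def[symmetric] conjf conjh inner_commute)
  have Lxb: "L xbar = Vf xf + (1/2) * (xbar \<bullet> (A *v xbar)) - c \<bullet> xbar + \<mu> * Vh xh + (1 / (2 * \<nu>)) * (Vh xh)\<^sup>2"
    by (simp add: L_def f_def h_def xf_def xh_def)
  have Lx0: "L xbar = Xi xbar \<tau>0 s0f s0h"
    unfolding Xi0 Lxb using nu_pos by (simp add: \<tau>0_def hx field_simps power2_eq_square)
  have inj0: "\<And>v. G \<tau>0 s0f s0h *v v = 0 \<Longrightarrow> v = 0" if "invertible (G \<tau>0 s0f s0h)"
    using that by (simp add: invertible_left_inverse matrix_left_invertible_ker)
  have the0: "(THE y. GDERIV (\<lambda>y. Xi y \<tau>0 s0f s0h) y :> 0) = xbar" if "invertible (G \<tau>0 s0f s0h)"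
  proof (rule the_equality)
    show "GDERIV (\<lambda>y. Xi y \<tau>0 s0f s0h) xbar :> 0" using stat_iff statX by simp
    fix y assume "GDERIV (\<lambda>y. Xi y \<tau>0 s0f s0h) y :> 0"
    then have "G \<tau>0 s0f s0h *v y + Bt \<tau>0 s0f s0h = 0" using stat_iff by simp
    then have "G \<tau>0 s0f s0h *v y = G \<tau>0 s0f s0h *v xbar" using statX by (metis add_right_cancel)
    then have "G \<tau>0 s0f s0h *v (y - xbar) = 0" by (simp add: matrix_vector_mult_diff_distrib)
    then have "y - xbar = 0" by (rule inj0[OF that])
    then show "y = xbar" by simp
  qed
  have part1b: "L xbar = Pd \<tau>0 s0f s0h" if "invertible (G \<tau>0 s0f s0h)"
    using Pd_def the0[OF that] Lx0 by simp
  have part2: "\<forall>x. L xbar \<le> L x"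
    if cvf: "convex_on Ef Vf" and cvh: "convex_on Eh Vh" and mp: "\<mu> + \<tau>0 > 0"
      and pd: "pos_def_mat (G \<tau>0 s0f s0h)"
  proof
    fix x
    let ?yf = "quad_map Qf bf df x" and ?yh = "quad_map Qh bh dh x"
    have yf: "?yf \<in> Ef" and yh: "?yh \<in> Eh" using Lf_img Lh_img by auto
    have t1: "Vf xf + s0f \<bullet> (?yf - xf) \<le> Vf ?yf" by (rule tangent_ineq[OF cvf xfE yf Vf_d])
    have t2: "Vh xh + s0h \<bullet> (?yh - xh) \<le> Vh ?yh" by (rule tangent_ineq[OF cvh xhE yh Vh_d])
    have a1: "?yf \<bullet> s0f - legendre_conj Vf gVf Ef s0f \<le> Vf ?yf"
      using t1 by (simp add: conjf inner_diff_right inner_commute)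
    have a2: "?yh \<bullet> s0h - legendre_conj Vh gVh Eh s0h \<le> h x"
      using t2 h_def by (simp add: conjh inner_diff_right inner_commute)
    have a3: "(\<mu> + \<tau>0) * (?yh \<bullet> s0h - legendre_conj Vh gVh Eh s0h) \<le> (\<mu> + \<tau>0) * h x"
      using a2 mp by (simp add: mult_left_mono)
    have a4: "\<tau>0 * h x - (\<nu> / 2) * \<tau>0\<^sup>2 \<le> (1 / (2 * \<nu>)) * (h x)\<^sup>2"
    proof -
      have "0 \<le> (h x - \<nu> * \<tau>0)\<^sup>2 / (2 * \<nu>)" using nu_pos by simp
      also have "(h x - \<nu> * \<tau>0)\<^sup>2 / (2 * \<nu>) = (1 / (2 * \<nu>)) * (h x)\<^sup>2 - (\<tau>0 * h x - (\<nu> / 2) * \<tau>0\<^sup>2)"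
        using nu_pos by (simp add: field_simps power2_eq_square)
      finally show ?thesis by simp
    qed
    have up: "Xi x \<tau>0 s0f s0h \<le> L x"
      using a1 a3 a4 by (simp add: Xi_def[rule_format] L_def[rule_format] f_def[rule_format] algebra_simps)
    have low: "Xi xbar \<tau>0 s0f s0h \<le> Xi x \<tau>0 s0f s0h"
    proof -
      have "Xi x \<tau>0 s0f s0h = Xi xbar \<tau>0 s0f s0h + (1/2) * ((x - xbar) \<bullet> (G \<tau>0 s0f s0h *v (x - xbar)))"
        unfolding XiE using qf_expand[OF Gsym, where y=x and x=xbar] statX by simp
      moreover have "0 \<le> (x - xbar) \<bullet> (G \<tau>0 s0f s0h *v (x - xbar))"
        using pd unfolding pos_def_mat_def by (cases "x - xbar = 0") (auto intro: less_imp_le)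
      ultimately show ?thesis by simp
    qed
    show "L xbar \<le> L x" using Lx0 up low by simp
  qed
  have part1a: "((\<lambda>(\<tau>, sf, sh). Pd \<tau> sf sh) has_derivative (\<lambda>_. 0)) (at (\<tau>0, s0f, s0h))"
    if inv: "invertible (G \<tau>0 s0f s0h)"
  proof -
    define p0 where "p0 = (\<tau>0, s0f, s0h)"
    define Gp where "Gp = (\<lambda>p::real \<times> (real^'kf) \<times> (real^'l). G (fst p) (fst (snd p)) (snd (snd p)))"
    define Bp where "Bp = (\<lambda>p::real \<times> (real^'kf) \<times> (real^'l). Bt (fst p) (fst (snd p)) (snd (snd p)))"
    define gr where "gr = (\<lambda>p. Gp p *v xbar + Bp p)"
    define Pc where "Pc = (\<lambda>(\<tau>, sf, sh). Pd \<tau> sf sh)"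
    define F where "F = (\<lambda>p::real \<times> (real^'kf) \<times> (real^'l). Xi xbar (fst p) (fst (snd p)) (snd (snd p)))"
    define E where "E = (\<lambda>p. Pc p - F p)"
    define Cf where "Cf = legendre_conj Vf gVf Ef"
    define Ch where "Ch = legendre_conj Vh gVh Eh"
    have s0fE: "s0f \<in> Efs" using Vf_can xfE by (auto simp: canonical_def s0f_def bij_betw_def)
    have s0hE: "s0h \<in> Ehs" using Vh_can xhE by (auto simp: canonical_def s0h_def bij_betw_def)
    have Cf_d: "GDERIV Cf s0f :> xf"
    proof -
      have "GDERIV Cf s0f :> inv_into Ef gVf s0f" using Vf_can s0fE by (simp add: canonical_def Cf_def)
      moreover have "inv_into Ef gVf s0f = xf" using Vf_can xfE by (simp add: canonical_def bij_betw_def s0f_def)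
      ultimately show ?thesis by simp
    qed
    have Ch_d: "GDERIV Ch s0h :> xh"
    proof -
      have "GDERIV Ch s0h :> inv_into Eh gVh s0h" using Vh_can s0hE by (simp add: canonical_def Ch_def)
      moreover have "inv_into Eh gVh s0h = xh" using Vh_can xhE by (simp add: canonical_def bij_betw_def s0h_def)
      ultimately show ?thesis by simp
    qed
    have Dcf: "((\<lambda>p::real \<times> (real^'kf) \<times> (real^'l). Cf (fst (snd p))) has_derivative (\<lambda>h. fst (snd h) \<bullet> xf)) (at p0)"
    proof -
      have "((\<lambda>p::real \<times> (real^'kf) \<times> (real^'l). fst (snd p)) has_derivative (\<lambda>h. fst (snd h))) (at p0)"
        by (intro derivative_intros)
      moreover have "(Cf has_derivative (\<lambda>h. h \<bullet> xf)) (at (fst (snd p0)))"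
        using Cf_d by (simp add: gderiv_def p0_def)
      ultimately show ?thesis by (rule has_derivative_compose)
    qed
    have Dch: "((\<lambda>p::real \<times> (real^'kf) \<times> (real^'l). Ch (snd (snd p))) has_derivative (\<lambda>h. snd (snd h) \<bullet> xh)) (at p0)"
    proof -
      have "((\<lambda>p::real \<times> (real^'kf) \<times> (real^'l). snd (snd p)) has_derivative (\<lambda>h. snd (snd h))) (at p0)"
        by (intro derivative_intros)
      moreover have "(Ch has_derivative (\<lambda>h. h \<bullet> xh)) (at (snd (snd p0)))"
        using Ch_d by (simp add: gderiv_def p0_def)
      ultimately show ?thesis by (rule has_derivative_compose)
    qed
    have Feq: "F = (\<lambda>p. xf \<bullet> fst (snd p) - Cf (fst (snd p)) + (\<mu> + fst p) * (xh \<bullet> snd (snd p) - Ch (snd (snd p)))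
        - (\<nu> / 2) * (fst p)\<^sup>2 + ((1/2) * (xbar \<bullet> (A *v xbar)) - c \<bullet> xbar))"
      by (auto simp: F_def Xi_def[rule_format] xf_def xh_def Cf_def Ch_def)
    have ChV: "s0h \<bullet> xh - Ch s0h = \<nu> * \<tau>0"
      using conjh nu_pos by (simp add: Ch_def \<tau>0_def hx inner_commute)
    have DF: "(F has_derivative (\<lambda>_. 0)) (at p0)"
      unfolding Feq
      apply (rule has_derivative_eq_rhs)
       apply (rule derivative_eq_intros Dcf Dch | simp)+
      apply (rule ext)
      apply (simp add: p0_def ChV inner_commute)
      done
    have Geq: "Gp = (\<lambda>p. A + (\<Sum>i\<in>UNIV. fst (snd p) $ i *\<^sub>R Qf i) + (\<mu> + fst p) *\<^sub>R (\<Sum>j\<in>UNIV. snd (snd p) $ j *\<^sub>R Qh j))"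
      by (auto simp: Gp_def G_def hess_comb_def)
    have Gcont: "(Gp \<longlongrightarrow> Gp p0) (at p0)"
    proof -
      have "((\<lambda>p. A + (\<Sum>i\<in>UNIV. fst (snd p) $ i *\<^sub>R Qf i) + (\<mu> + fst p) *\<^sub>R (\<Sum>j\<in>UNIV. snd (snd p) $ j *\<^sub>R Qh j))
          \<longlongrightarrow> A + (\<Sum>i\<in>UNIV. fst (snd p0) $ i *\<^sub>R Qf i) + (\<mu> + fst p0) *\<^sub>R (\<Sum>j\<in>UNIV. snd (snd p0) $ j *\<^sub>R Qh j)) (at p0)"
        by (intro tendsto_intros)
      then show ?thesis unfolding Geq .
    qed
    define S where "S = (\<lambda>M::real^'n^'n. \<Sum>i\<in>UNIV. \<Sum>j\<in>UNIV. \<bar>M $ i $ j\<bar>)"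
    have Scont: "((\<lambda>p. S (Gp p - Gp p0)) \<longlongrightarrow> 0) (at p0)"
    proof -
      have "((\<lambda>p. \<Sum>i\<in>UNIV. \<Sum>j\<in>UNIV. \<bar>(Gp p - Gp p0) $ i $ j\<bar>) \<longlongrightarrow> (\<Sum>i\<in>UNIV. \<Sum>j\<in>UNIV. \<bar>(Gp p0 - Gp p0) $ i $ j\<bar>)) (at p0)"
        by (intro tendsto_intros Gcont)
      then show ?thesis by (simp add: S_def)
    qed
    have G0: "Gp p0 = G \<tau>0 s0f s0h" by (simp add: Gp_def p0_def)
    obtain B where B: "B ** Gp p0 = mat 1" using inv G0 by (auto simp: invertible_left_inverse)
    obtain KB where KB: "KB > 0" "\<And>w. norm (B *v w) \<le> norm w * KB"
      using bounded_linear.pos_bounded[OF matrix_vector_mul_bounded_linear[of B]] by blast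
    have lowG0: "norm v \<le> norm (Gp p0 *v v) * KB" for v
    proof -
      have "v = B *v (Gp p0 *v v)" by (simp add: matrix_vector_mul_assoc B)
      then show ?thesis using KB(2)[of "Gp p0 *v v"] by simp
    qed
    have evS: "eventually (\<lambda>p. S (Gp p - Gp p0) < 1 / (2 * KB)) (at p0)"
      using order_tendstoD(2)[OF Scont] KB(1) by simp
    have evLow: "eventually (\<lambda>p. \<forall>v. norm v \<le> 2 * KB * norm (Gp p *v v)) (at p0)"
      using evS
    proof eventually_elim
      case (elim p)
      show ?case
      proof
        fix v :: "real^'n"
        have "norm ((Gp p - Gp p0) *v v) \<le> S (Gp p - Gp p0) * norm v"
          unfolding S_def by (rule mv_norm_le)
        also have "\<dots> \<le> (1 / (2 * KB)) * norm v"
          using elim by (intro mult_right_mono) auto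
        finally have a: "norm ((Gp p - Gp p0) *v v) \<le> norm v / (2 * KB)" by simp
        have "Gp p0 *v v = Gp p *v v - (Gp p - Gp p0) *v v" by (simp add: matrix_vector_mult_diff_rdistrib)
        then have b: "norm (Gp p0 *v v) \<le> norm (Gp p *v v) + norm ((Gp p - Gp p0) *v v)"
          using norm_triangle_ineq4 by metis
        have "norm (Gp p0 *v v) \<le> norm (Gp p *v v) + norm v / (2 * KB)" using a b by linarith
        then have "norm (Gp p0 *v v) * KB \<le> (norm (Gp p *v v) + norm v / (2 * KB)) * KB"
          using KB(1) by (intro mult_right_mono) auto
        then have "norm v \<le> (norm (Gp p *v v) + norm v / (2 * KB)) * KB"
          using lowG0[of v] by linarith
        then have "norm v \<le> norm (Gp p *v v) * KB + norm v / 2"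
          using KB(1) by (simp add: algebra_simps)
        then show "norm v \<le> 2 * KB * norm (Gp p *v v)" by (simp add: algebra_simps)
      qed
    qed
    have gr_eq: "gr = (\<lambda>p. A *v xbar + (\<Sum>i\<in>UNIV. fst (snd p) $ i *\<^sub>R (Qf i *v xbar + bf i))
        + (\<mu> + fst p) *\<^sub>R (\<Sum>j\<in>UNIV. snd (snd p) $ j *\<^sub>R (Qh j *v xbar + bh j)) - c)"
    proof
      fix p
      show "gr p = A *v xbar + (\<Sum>i\<in>UNIV. fst (snd p) $ i *\<^sub>R (Qf i *v xbar + bf i))
        + (\<mu> + fst p) *\<^sub>R (\<Sum>j\<in>UNIV. snd (snd p) $ j *\<^sub>R (Qh j *v xbar + bh j)) - c"
        unfolding gr_def Gp_def Bp_def Bt_def G_def[rule_format]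
        by (simp add: matrix_vector_mult_add_rdistrib hess_comb_mv scaleR_matrix_vector_assoc[symmetric]
            scaleR_right_distrib sum.distrib algebra_simps)
    qed
    have "\<exists>D. (gr has_derivative D) (at p0)"
      unfolding gr_eq by (rule exI, (rule derivative_intros has_derivative_vec_nth')+)
    then obtain Dg where Dg: "(gr has_derivative Dg) (at p0)" by blast
    obtain Kg where Kg: "eventually (\<lambda>p. norm (gr p - gr p0) \<le> Kg * norm (p - p0)) (at p0)"
      using deriv_lip[OF Dg] by blast
    have gr0: "gr p0 = 0" using statX by (simp add: gr_def Gp_def Bp_def p0_def)
    have evE: "eventually (\<lambda>p. \<bar>E p\<bar> \<le> (KB * Kg\<^sup>2) * (norm (p - p0))\<^sup>2) (at p0)"
      using evLow Kg
    proof eventually_elim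
      case (elim p)
      obtain \<tau> sf sh where p: "p = (\<tau>, sf, sh)" by (cases p) auto
      have Gpp: "Gp p = G \<tau> sf sh" and Bpp: "Bp p = Bt \<tau> sf sh" by (simp_all add: Gp_def Bp_def p)
      have injp: "G \<tau> sf sh *v v = 0 \<Longrightarrow> v = 0" for v
        using elim(1) Gpp by (metis mult_zero_right norm_eq_zero norm_le_zero_iff)
      then have "invertible (G \<tau> sf sh)"
        by (simp add: invertible_left_inverse matrix_left_invertible_ker)
      then obtain B' where B': "G \<tau> sf sh ** B' = mat 1" by (auto simp: invertible_right_inverse)
      define xp where "xp = B' *v (- Bt \<tau> sf sh)"
      have xp: "G \<tau> sf sh *v xp + Bt \<tau> sf sh = 0"
        by (simp add: xp_def matrix_vector_mul_assoc B')
      have the_p: "(THE y. GDERIV (\<lambda>y. Xi y \<tau> sf sh) y :> 0) = xp"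
      proof (rule the_equality)
        show "GDERIV (\<lambda>y. Xi y \<tau> sf sh) xp :> 0" using stat_iff xp by simp
        fix y assume "GDERIV (\<lambda>y. Xi y \<tau> sf sh) y :> 0"
        then have "G \<tau> sf sh *v y + Bt \<tau> sf sh = 0" using stat_iff by simp
        then have "G \<tau> sf sh *v y = G \<tau> sf sh *v xp" using xp by (metis add_right_cancel)
        then have "G \<tau> sf sh *v (y - xp) = 0" by (simp add: matrix_vector_mult_diff_distrib)
        then have "y - xp = 0" by (rule injp)
        then show "y = xp" by simp
      qed
      have Pcp: "Pc p = Xi xp \<tau> sf sh" using Pd_def the_p by (simp add: Pc_def p)
      define d where "d = xbar - xp"
      have exp: "Xi xbar \<tau> sf sh = Xi xp \<tau> sf sh + (1/2) * (d \<bullet> (G \<tau> sf sh *v d))"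
        unfolding XiE d_def using qf_expand[OF Gsym, where y=xbar and x=xp] xp by simp
      have Ep: "E p = - (1/2) * (d \<bullet> (G \<tau> sf sh *v d))"
        using exp Pcp by (simp add: E_def F_def p)
      have Gd: "G \<tau> sf sh *v d = gr p"
        using xp by (simp add: d_def gr_def Gpp Bpp matrix_vector_mult_diff_distrib algebra_simps)
      have grp: "norm (gr p) \<le> Kg * norm (p - p0)" using elim(2) gr0 by simp
      have nd: "norm d \<le> 2 * KB * norm (gr p)" using elim(1) Gd Gpp by metis
      have "\<bar>E p\<bar> = (1/2) * \<bar>d \<bullet> gr p\<bar>" using Ep Gd by (simp add: abs_mult)
      also have "\<dots> \<le> (1/2) * (norm d * norm (gr p))"
        by (intro mult_left_mono Cauchy_Schwarz_ineq2) simp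
      also have "\<dots> \<le> (1/2) * ((2 * KB * norm (gr p)) * norm (gr p))"
        using nd by (intro mult_left_mono mult_right_mono) auto
      also have "\<dots> = KB * (norm (gr p))\<^sup>2" by (simp add: power2_eq_square)
      also have "\<dots> \<le> KB * (Kg * norm (p - p0))\<^sup>2"
        using grp KB(1) by (intro mult_left_mono power_mono) auto
      also have "\<dots> = (KB * Kg\<^sup>2) * (norm (p - p0))\<^sup>2" by (simp add: power_mult_distrib)
      finally show ?case .
    qed
    have E0: "E p0 = 0"
      using part1b[OF inv] Lx0 by (simp add: E_def Pc_def F_def p0_def)
    have DE: "(E has_derivative (\<lambda>_. 0)) (at p0)" by (rule small_deriv[OF evE E0])
    have "((\<lambda>p. F p + E p) has_derivative (\<lambda>h. 0 + 0)) (at p0)"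
      by (rule has_derivative_add[OF DF DE])
    moreover have "(\<lambda>p. F p + E p) = Pc" by (auto simp: E_def)
    ultimately show ?thesis by (simp add: Pc_def p0_def)
  qed
  show ?thesis
    using part1a part1b part2 unfolding \<tau>0_def s0f_def s0h_def xf_def xh_def by blast
qed

end
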